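(* Let $N\ge 0$ be an integer, let $\mathcal{H}_N$ be a complex inner-product space of dimension $N+1$ with orthonormal basis $|\Psi_0\rangle,\dots,|\Psi_N\rangle$, and let $\beta_0,\dots,\beta_{N-1}>0$ be real numbers, with $\beta_N=0$. Let $\hat A$ be the linear operator on $\mathcal{H}_N$ defined by $\hat A|\Psi_0\rangle=0$ and $\hat A|\Psi_{n+1}\rangle=\sqrt{\beta_n}\,|\Psi_n\rangle$ for $0\le n\le N-1$, and let $\hat A^\dagger$ be its adjoint, so that $\hat A^\dagger|\Psi_n\rangle=\sqrt{\beta_n}\,|\Psi_{n+1}\rangle$ for $0\le n\le N-1$ and $\hat A^\dagger|\Psi_N\rangle=0$. Then for every integer $m\ge 0$, $$(\hat A+\hat A^\dagger)^m|\Psi_0\rangle=\sum_{l=0}^{[m/2]} c_{m,l}\,(\hat A^\dagger)^{m-2l}|\Psi_0\rangle,$$ where $[\cdot]$ denotes the integer part, $c_{m,0}=1$, and for $l\ge 1$ $$c_{m,l}=\sum_{s_1=0}^{s_0+1}\beta_{s_1}\sum_{s_2=0}^{s_1+1}\beta_{s_2}\cdots\sum_{s_l=0}^{s_{l-1}+1}\beta_{s_l},\qquad s_0\equiv m-2l-1,$$ i.e. $c_{m,l}=\sum_{s_1=0}^{m-2l}\beta_{s_1}\sum_{s_2=0}^{s_1+1}\beta_{s_2}\cdots\sum_{s_l=0}^{s_{l-1}+1}\beta_{s_l}$ (nested sums, each $\beta_{s_j}$ multiplying all inner sums).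
   Context: This is the abstract form of a boson interaction model: the interaction Hamiltonian restricted to a finite-dimensional invariant subspace is $\hat A+\hat A^\dagger$, where the ladder operator $\hat A$ acts by nearest-neighbour transitions with squared matrix elements $\beta_n$. Convention: $\beta_s$ is set to $0$ for all integers $s\ge N$ (such indices only occur in terms that multiply $(\hat A^\dagger)^{k}|\Psi_0\rangle$ with $k>N$, which is the zero vector). *)

theory Defs
  imports Complex_Main
begin

text \<open>Concrete model of H_N: vectors are coordinate functions nat => complex
  (coordinates with respect to the orthonormal basis Psi_0..Psi_N; only the
  coordinates 0..N are ever nonzero).\<close>

definition basis_vec :: "nat \<Rightarrow> (nat \<Rightarrow> complex)" where
  "basis_vec n = (\<lambda>k. if k = n then 1 else 0)"

definition lower_op :: "nat \<Rightarrow> (nat \<Rightarrow> real) \<Rightarrow> (nat \<Rightarrow> complex) \<Rightarrow> (nat \<Rightarrow> complex)" where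
  "lower_op N \<beta> v = (\<lambda>k. if k < N then complex_of_real (sqrt (\<beta> k)) * v (Suc k) else 0)"

definition raise_op :: "nat \<Rightarrow> (nat \<Rightarrow> real) \<Rightarrow> (nat \<Rightarrow> complex) \<Rightarrow> (nat \<Rightarrow> complex)" where
  "raise_op N \<beta> v = (\<lambda>k. if 1 \<le> k \<and> k \<le> N then complex_of_real (sqrt (\<beta> (k - 1))) * v (k - 1) else 0)"

fun nested_sum :: "(nat \<Rightarrow> real) \<Rightarrow> nat \<Rightarrow> nat \<Rightarrow> real" where
  "nested_sum \<beta> 0 s = 1"
| "nested_sum \<beta> (Suc l) s = (\<Sum>t = 0..Suc s. \<beta> t * nested_sum \<beta> l t)"

definition coef_c :: "(nat \<Rightarrow> real) \<Rightarrow> nat \<Rightarrow> nat \<Rightarrow> real" where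
  "coef_c \<beta> m l = (if l = 0 then 1
     else (\<Sum>s1 = 0..m - 2 * l. \<beta> s1 * nested_sum \<beta> (l - 1) s1))"

end

theory Submission
  imports Defs
begin

definition PP :: "nat \<Rightarrow> (nat \<Rightarrow> real) \<Rightarrow> nat \<Rightarrow> nat \<Rightarrow> complex" where
  "PP N \<beta> j = (raise_op N \<beta> ^^ j) (basis_vec 0)"

lemma PP_Suc: "PP N \<beta> (Suc j) = raise_op N \<beta> (PP N \<beta> j)"
  by (simp add: PP_def)

lemma PP_formula:
  assumes nn: "\<And>i. \<beta> i \<ge> 0"
  shows "PP N \<beta> j k = (if k = j \<and> j \<le> N then complex_of_real (sqrt (\<Prod>i<j. \<beta> i)) else 0)"
proof (induction j arbitrary: k)
  case 0
  then show ?case by (simp add: PP_def basis_vec_def)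
next
  case (Suc j)
  have pr: "0 \<le> (\<Prod>i<j. \<beta> i)" using nn by (simp add: prod_nonneg)
  show ?case
    using Suc pr nn
    by (auto simp: PP_Suc raise_op_def real_sqrt_mult mult.commute simp flip: of_real_mult)
qed

lemma lower_PP_Suc:
  assumes nn: "\<And>i. \<beta> i \<ge> 0" and zero: "\<And>s. N \<le> s \<Longrightarrow> \<beta> s = 0"
  shows "lower_op N \<beta> (PP N \<beta> (Suc j)) k = complex_of_real (\<beta> j) * PP N \<beta> j k"
proof -
  have pr: "0 \<le> (\<Prod>i<j. \<beta> i)" using nn by (simp add: prod_nonneg)
  have "sqrt (\<beta> j) * sqrt (\<beta> j * (\<Prod>i<j. \<beta> i)) = \<beta> j * sqrt (\<Prod>i<j. \<beta> i)"
    using nn[of j] pr by (simp add: real_sqrt_mult)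
  then have e: "complex_of_real (sqrt (\<beta> j)) * complex_of_real (sqrt (\<beta> j * (\<Prod>i<j. \<beta> i)))
     = complex_of_real (\<beta> j) * complex_of_real (sqrt (\<Prod>i<j. \<beta> i))"
    by (metis of_real_mult)
  show ?thesis
    unfolding lower_op_def
    using e zero[of N]
    by (auto simp: PP_formula[OF nn] mult.commute)
qed

lemma lower_PP_0: "lower_op N \<beta> (PP N \<beta> 0) k = 0"
  by (simp add: lower_op_def PP_def basis_vec_def)

lemma lower_lin:
  "lower_op N \<beta> (\<lambda>k. \<Sum>l\<in>S. a l * f l k) k = (\<Sum>l\<in>S. a l * lower_op N \<beta> (f l) k)"
  by (simp add: lower_op_def sum_distrib_left algebra_simps)

lemma raise_lin:
  "raise_op N \<beta> (\<lambda>k. \<Sum>l\<in>S. a l * f l k) k = (\<Sum>l\<in>S. a l * raise_op N \<beta> (f l) k)"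
  by (cases "1 \<le> k \<and> k \<le> N") (auto simp: raise_op_def sum_distrib_left algebra_simps)

lemma coef_prev:
  assumes "1 \<le> l" "2 * l \<le> m + 1"
  shows "coef_c \<beta> m (l - 1) = nested_sum \<beta> (l - 1) (m + 1 - 2 * l)"
proof (cases "l = 1")
  case True
  then show ?thesis by (simp add: coef_c_def)
next
  case False
  have "\<exists>q. l = Suc (Suc q)" using assms False by presburger
  then obtain q where q: "l = Suc (Suc q)" by blast
  have "m - 2 * Suc q = Suc (m + 1 - 2 * l)" using q assms by simp
  then show ?thesis using q by (simp add: coef_c_def)
qed

lemma coef_rec:
  assumes "1 \<le> l" "2 * l \<le> m + 1"
  shows "coef_c \<beta> (Suc m) l = (if 2 * l \<le> m then coef_c \<beta> m l else 0)
          + \<beta> (m + 1 - 2 * l) * coef_c \<beta> m (l - 1)"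
proof -
  have c1: "coef_c \<beta> (Suc m) l = (\<Sum>s = 0..m + 1 - 2 * l. \<beta> s * nested_sum \<beta> (l - 1) s)"
    using assms by (simp add: coef_c_def)
  show ?thesis
  proof (cases "2 * l \<le> m")
    case True
    then have e: "m + 1 - 2 * l = Suc (m - 2 * l)" by simp
    have cp: "coef_c \<beta> m (l - 1) = nested_sum \<beta> (l - 1) (Suc (m - 2 * l))"
      using coef_prev[OF assms, of \<beta>] e by simp
    have cm: "coef_c \<beta> m l = (\<Sum>s = 0..m - 2 * l. \<beta> s * nested_sum \<beta> (l - 1) s)"
      using assms by (simp add: coef_c_def)
    show ?thesis unfolding c1 e cp cm using True by simp
  next
    case False
    then have e: "m + 1 - 2 * l = 0" using assms by simp
    have cp: "coef_c \<beta> m (l - 1) = nested_sum \<beta> (l - 1) 0"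
      using coef_prev[OF assms, of \<beta>] e by simp
    show ?thesis unfolding c1 e cp using False by simp
  qed
qed

lemma shift_sum:
  "(\<Sum>l = 0..n. if l = 0 then 0 else g l) = (\<Sum>l<n. g (Suc l) :: complex)"
  by (induction n) auto

theorem theorem1:
  fixes N :: nat and \<beta> :: "nat \<Rightarrow> real" and m :: nat
  assumes pos: "\<And>n. n < N \<Longrightarrow> \<beta> n > 0"
    and zero: "\<And>s. N \<le> s \<Longrightarrow> \<beta> s = 0"
  shows "((\<lambda>v. (\<lambda>k. lower_op N \<beta> v k + raise_op N \<beta> v k)) ^^ m) (basis_vec 0)
       = (\<lambda>k. \<Sum>l = 0..m div 2. complex_of_real (coef_c \<beta> m l)
                 * ((raise_op N \<beta> ^^ (m - 2 * l)) (basis_vec 0)) k)"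
proof -
  have nn: "\<And>i. \<beta> i \<ge> 0"
    by (metis linorder_not_le order_less_imp_le order_refl pos zero)
  define H where "H = (\<lambda>v. (\<lambda>k. lower_op N \<beta> v k + raise_op N \<beta> v k))"
  define g where "g m = (\<lambda>k. \<Sum>l = 0..m div 2. complex_of_real (coef_c \<beta> m l) * PP N \<beta> (m - 2 * l) k)" for m
  have step: "H (g m) = g (Suc m)" for m
  proof
    fix k
    let ?c = "\<lambda>m l. complex_of_real (coef_c \<beta> m l)"
    define A where "A = (\<Sum>l = 0..m div 2. ?c m l * PP N \<beta> (m + 1 - 2 * l) k)"
    define B where "B = (\<Sum>l<(m+1) div 2. complex_of_real (\<beta> (m - 1 - 2 * l)) * ?c m l * PP N \<beta> (m - 1 - 2 * l) k)"
    have r: "raise_op N \<beta> (g m) k = A"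
      unfolding g_def raise_lin A_def
      by (intro sum.cong refl) (auto simp: PP_Suc[symmetric] Suc_diff_le)
    have "lower_op N \<beta> (g m) k = (\<Sum>l\<in>{0..m div 2}. if 2 * l < m then
        complex_of_real (\<beta> (m - 1 - 2 * l)) * ?c m l * PP N \<beta> (m - 1 - 2 * l) k else 0)"
      unfolding g_def lower_lin
    proof (intro sum.cong refl)
      fix l assume "l \<in> {0..m div 2}"
      show "?c m l * lower_op N \<beta> (PP N \<beta> (m - 2 * l)) k = (if 2 * l < m then
        complex_of_real (\<beta> (m - 1 - 2 * l)) * ?c m l * PP N \<beta> (m - 1 - 2 * l) k else 0)"
      proof (cases "2 * l < m")
        case True
        then have "m - 2 * l = Suc (m - 1 - 2 * l)" by simp
        then show ?thesis using True by (simp add: lower_PP_Suc[OF nn zero])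
      next
        case False
        then have "m - 2 * l = 0" by simp
        then show ?thesis using False by (simp add: lower_PP_0)
      qed
    qed
    also have "\<dots> = B"
      unfolding B_def
      by (subst sum.inter_filter[symmetric], simp, intro sum.cong refl) auto
    finally have lw: "lower_op N \<beta> (g m) k = B" .
    have "g (Suc m) k = (\<Sum>l = 0..Suc m div 2.
        (if 2 * l \<le> m then ?c m l * PP N \<beta> (m + 1 - 2 * l) k else 0)
      + (if l = 0 then 0 else complex_of_real (\<beta> (m + 1 - 2 * l)) * ?c m (l - 1) * PP N \<beta> (m + 1 - 2 * l) k))"
      unfolding g_def
    proof (intro sum.cong refl)
      fix l assume l: "l \<in> {0..Suc m div 2}"
      show "?c (Suc m) l * PP N \<beta> (Suc m - 2 * l) k = 
        (if 2 * l \<le> m then ?c m l * PP N \<beta> (m + 1 - 2 * l) k else 0)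
      + (if l = 0 then 0 else complex_of_real (\<beta> (m + 1 - 2 * l)) * ?c m (l - 1) * PP N \<beta> (m + 1 - 2 * l) k)"
      proof (cases "l = 0")
        case True
        then show ?thesis by (simp add: coef_c_def)
      next
        case False
        then have "1 \<le> l" "2 * l \<le> m + 1" using l by auto
        from coef_rec[OF this, of \<beta>] False show ?thesis
          by (auto simp: distrib_right)
      qed
    qed
    also have "\<dots> = A + B"
    proof -
      have a: "(\<Sum>l = 0..Suc m div 2. (if 2 * l \<le> m then ?c m l * PP N \<beta> (m + 1 - 2 * l) k else 0)) = A"
        unfolding A_def
        by (subst sum.inter_filter[symmetric], simp, intro sum.cong refl) auto
      have b: "(\<Sum>l = 0..Suc m div 2. (if l = 0 then 0 else complex_of_real (\<beta> (m + 1 - 2 * l)) * ?c m (l - 1) * PP N \<beta> (m + 1 - 2 * l) k)) = B"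
        unfolding B_def shift_sum
      proof (intro sum.cong refl)
        fix x
        have "m + 1 - 2 * Suc x = m - 1 - 2 * x" by simp
        then show "complex_of_real (\<beta> (m + 1 - 2 * Suc x)) * ?c m (Suc x - 1) * PP N \<beta> (m + 1 - 2 * Suc x) k
          = complex_of_real (\<beta> (m - 1 - 2 * x)) * ?c m x * PP N \<beta> (m - 1 - 2 * x) k" by simp
      qed simp
      show ?thesis using a b by (simp add: sum.distrib)
    qed
    finally show "H (g m) k = g (Suc m) k"
      using r lw by (simp add: H_def add.commute)
  qed
  have main: "(H ^^ m) (basis_vec 0) = g m"
  proof (induction m)
    case 0
    show ?case by (auto simp: g_def PP_def coef_c_def)
  next
    case (Suc m)
    then show ?case using step by simp
  qed
  show ?thesis using main unfolding H_def g_def PP_def .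
qed

end
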